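(* Let $k,n$ be integers with $k\geq 5$ and $n\geq 4$, and let $c$ be an exact $k$-coloring of $\mathcal{B}_n$ with $c(\emptyset)\neq c([n])$. Then $\mathcal{B}_n$ contains no rainbow induced copy of $\mathcal{B}_2$ if and only if $k=5$ and $c$ is of Type 1.
   Context: $\mathcal{B}_n$ is the Boolean lattice of subsets of $[n]$ under inclusion. For $X\subseteq Y$: $\mathcal{B}_{[X,Y]}=\{Z:X\subseteq Z\subseteq Y\}$, and $\mathcal{B}_{(X,Y)}$, $\mathcal{B}_{(X,Y]}$, $\mathcal{B}_{[X,Y)}$ are defined analogously with strict inclusions at the open ends. An exact $k$-coloring is a surjective map $c:\mathcal{B}_n\to[k]$. A rainbow induced copy of $\mathcal{B}_2$ is four sets $W_1,W_2,W_3,W_4$ with $W_1\subsetneq W_2\subsetneq W_4$, $W_1\subsetneq W_3\subsetneq W_4$, $W_2,W_3$ incomparable, and $c(W_1),\dots,c(W_4)$ pairwise distinct. "Families $\mathcal{F}_1,\dots,\mathcal{F}_r$ are monochromatically colored with distinct colors" means each $\mathcal{F}_i$ is monochromatic and no two sets from different families share a color. The coloring $c$ is of Type 1 if there exist $X_0,Y_0$ with $\emptyset\subsetneq X_0\subsetneq Y_0\subsetneq[n]$ and $|Y_0|\geq|X_0|+2$ such that the families $\mathcal{B}_{[\emptyset,Y_0]}\setminus\mathcal{B}_{[X_0,Y_0]}$, $\{X_0\}$, $\mathcal{B}_{(X_0,Y_0)}$, $\{Y_0\}$, $\mathcal{B}_{[X_0,[n]]}\setminus\mathcal{B}_{[X_0,Y_0]}$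 are monochromatically colored with distinct colors, and each set in $\mathcal{B}_n\setminus(\mathcal{B}_{[\emptyset,Y_0]}\cup\mathcal{B}_{[X_0,[n]]})$ has the same color as the sets of the first or of the last of these families. *)

theory Defs
  imports Main
begin

definition Bn :: "nat \<Rightarrow> nat set set" where
  "Bn n = Pow {1..n}"

definition intv_cc :: "nat set \<Rightarrow> nat set \<Rightarrow> nat set set" where
  "intv_cc X Y = {Z. X \<subseteq> Z \<and> Z \<subseteq> Y}"

definition intv_oo :: "nat set \<Rightarrow> nat set \<Rightarrow> nat set set" where
  "intv_oo X Y = {Z. X \<subset> Z \<and> Z \<subset> Y}"

definition exact_coloring :: "nat \<Rightarrow> nat \<Rightarrow> (nat set \<Rightarrow> nat) \<Rightarrow> bool" where
  "exact_coloring n k c \<longleftrightarrow> c ` Bn n = {1..k}"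

definition rainbow_B2 :: "nat \<Rightarrow> (nat set \<Rightarrow> nat) \<Rightarrow> nat set \<Rightarrow> nat set \<Rightarrow> nat set \<Rightarrow> nat set \<Rightarrow> bool" where
  "rainbow_B2 n c W1 W2 W3 W4 \<longleftrightarrow>
     W1 \<in> Bn n \<and> W2 \<in> Bn n \<and> W3 \<in> Bn n \<and> W4 \<in> Bn n \<and>
     W1 \<subset> W2 \<and> W2 \<subset> W4 \<and> W1 \<subset> W3 \<and> W3 \<subset> W4 \<and>
     \<not> W2 \<subseteq> W3 \<and> \<not> W3 \<subseteq> W2 \<and>
     distinct [c W1, c W2, c W3, c W4]"

definition has_rainbow_B2 :: "nat \<Rightarrow> (nat set \<Rightarrow> nat) \<Rightarrow> bool" where
  "has_rainbow_B2 n c \<longleftrightarrow> (\<exists>W1 W2 W3 W4. rainbow_B2 n c W1 W2 W3 W4)"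

definition mono_distinct :: "(nat set \<Rightarrow> nat) \<Rightarrow> nat set set list \<Rightarrow> bool" where
  "mono_distinct c Fs \<longleftrightarrow>
     (\<forall>i < length Fs. \<forall>A \<in> Fs ! i. \<forall>B \<in> Fs ! i. c A = c B) \<and>
     (\<forall>i < length Fs. \<forall>j < length Fs. i \<noteq> j \<longrightarrow>
        (\<forall>A \<in> Fs ! i. \<forall>B \<in> Fs ! j. c A \<noteq> c B))"

definition type1 :: "nat \<Rightarrow> (nat set \<Rightarrow> nat) \<Rightarrow> bool" where
  "type1 n c \<longleftrightarrow> (\<exists>X0 Y0.
     {} \<subset> X0 \<and> X0 \<subset> Y0 \<and> Y0 \<subset> {1..n} \<and> card Y0 \<ge> card X0 + 2 \<and>
     (let F1 = intv_cc {} Y0 - intv_cc X0 Y0;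
          F5 = intv_cc X0 {1..n} - intv_cc X0 Y0
      in mono_distinct c [F1, {X0}, intv_oo X0 Y0, {Y0}, F5] \<and>
         (\<forall>Z \<in> Bn n - (intv_cc {} Y0 \<union> intv_cc X0 {1..n}).
            (\<exists>A \<in> F1. c Z = c A) \<or> (\<exists>A \<in> F5. c Z = c A))))"

end

theory Submission imports Defs begin

definition tri :: "(nat set \<Rightarrow> nat) \<Rightarrow> nat \<Rightarrow> nat set \<Rightarrow> nat set \<Rightarrow> nat set \<Rightarrow> bool" where
  "tri c n P Q R \<longleftrightarrow> P \<subset> Q \<and> Q \<subset> R \<and> R \<subseteq> {1..n} \<and> distinct [c {}, c {1..n}, c P, c Q, c R]"

lemma triI:
  assumes "P \<subset> Q" "Q \<subset> R" "R \<subseteq> {1..n}" "distinct [c {}, c {1..n}, c P, c Q, c R]"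
  shows "tri c n P Q R"
  using assms unfolding tri_def by blast

lemma triD:
  assumes "tri c n P Q R"
  shows "P \<subset> Q" "Q \<subset> R" "R \<subseteq> {1..n}" "distinct [c {}, c {1..n}, c P, c Q, c R]"
  using assms unfolding tri_def by blast+

lemma dist5D: assumes "distinct [a,b,p,q,r]"
  shows "a\<noteq>b" "b\<noteq>a" "a\<noteq>p" "p\<noteq>a" "a\<noteq>q" "q\<noteq>a" "a\<noteq>r" "r\<noteq>a"
    "b\<noteq>p" "p\<noteq>b" "b\<noteq>q" "q\<noteq>b" "b\<noteq>r" "r\<noteq>b" "p\<noteq>q" "q\<noteq>p" "p\<noteq>r" "r\<noteq>p" "q\<noteq>r" "r\<noteq>q"
  using assms by auto

lemma mono_intro:
  assumes "length cs = length Fs" "distinct cs" "\<forall>i<length Fs. \<forall>A\<in>Fs!i. c A = cs!i"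
  shows "mono_distinct c Fs"
  using assms unfolding mono_distinct_def by (auto simp: nth_eq_iff_index_eq)

lemma less5: "i < (5::nat) \<Longrightarrow> i = 0 \<or> i = 1 \<or> i = 2 \<or> i = 3 \<or> i = 4"
  by arith

lemma mono5I:
  assumes "distinct [c1,c2,c3,c4,c5]" "\<forall>A\<in>F1. c A = c1" "\<forall>A\<in>F2. c A = c2"
    "\<forall>A\<in>F3. c A = c3" "\<forall>A\<in>F4. c A = c4" "\<forall>A\<in>F5. c A = c5"
  shows "mono_distinct c [F1,F2,F3,F4,F5]"
proof (rule mono_intro[where cs="[c1,c2,c3,c4,c5]"])
  show "length [c1,c2,c3,c4,c5] = length [F1,F2,F3,F4,F5]" by simp
  show "distinct [c1,c2,c3,c4,c5]" by (rule assms(1))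
  show "\<forall>i<length [F1,F2,F3,F4,F5]. \<forall>A\<in>[F1,F2,F3,F4,F5]!i. c A = [c1,c2,c3,c4,c5]!i"
  proof (intro allI impI)
    fix i assume "i < length [F1,F2,F3,F4,F5]"
    then have "i = 0 \<or> i = 1 \<or> i = 2 \<or> i = 3 \<or> i = 4" using less5 by simp
    then show "\<forall>A\<in>[F1,F2,F3,F4,F5]!i. c A = [c1,c2,c3,c4,c5]!i"
      using assms(2-6) by (elim disjE) simp_all
  qed
qed

lemma mono5D:
  assumes md: "mono_distinct c [F1,F2,F3,F4,F5]"
    and a: "a1\<in>F1" "a2\<in>F2" "a3\<in>F3" "a4\<in>F4" "a5\<in>F5"
  shows "distinct [c a1, c a2, c a3, c a4, c a5]" "\<forall>A\<in>F1. c A = c a1"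
    "\<forall>A\<in>F3. c A = c a3" "\<forall>A\<in>F5. c A = c a5"
proof -
  let ?Fs = "[F1,F2,F3,F4,F5]"
  have H1: "\<And>i A B. i < length ?Fs \<Longrightarrow> A \<in> ?Fs!i \<Longrightarrow> B \<in> ?Fs!i \<Longrightarrow> c A = c B"
    using md unfolding mono_distinct_def by blast
  have H2: "\<And>i j A B. i < length ?Fs \<Longrightarrow> j < length ?Fs \<Longrightarrow> i \<noteq> j \<Longrightarrow> A \<in> ?Fs!i \<Longrightarrow> B \<in> ?Fs!j \<Longrightarrow> c A \<noteq> c B"
    using md unfolding mono_distinct_def by blast
  show "\<forall>A\<in>F1. c A = c a1"
  proof
    fix A assume "A \<in> F1"
    then show "c A = c a1" using H1[of 0 A a1] a by simp
  qed
  show "\<forall>A\<in>F3. c A = c a3"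
  proof
    fix A assume "A \<in> F3"
    then show "c A = c a3" using H1[of 2 A a3] a by simp
  qed
  show "\<forall>A\<in>F5. c A = c a5"
  proof
    fix A assume "A \<in> F5"
    then show "c A = c a5" using H1[of 4 A a5] a by simp
  qed
  have "c a1 \<noteq> c a2" using H2[of 0 1 a1 a2] a by simp
  moreover have "c a1 \<noteq> c a3" using H2[of 0 2 a1 a3] a by simp
  moreover have "c a1 \<noteq> c a4" using H2[of 0 3 a1 a4] a by simp
  moreover have "c a1 \<noteq> c a5" using H2[of 0 4 a1 a5] a by simp
  moreover have "c a2 \<noteq> c a3" using H2[of 1 2 a2 a3] a by simp
  moreover have "c a2 \<noteq> c a4" using H2[of 1 3 a2 a4] a by simp
  moreover have "c a2 \<noteq> c a5" using H2[of 1 4 a2 a5] a by simp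
  moreover have "c a3 \<noteq> c a4" using H2[of 2 3 a3 a4] a by simp
  moreover have "c a3 \<noteq> c a5" using H2[of 2 4 a3 a5] a by simp
  moreover have "c a4 \<noteq> c a5" using H2[of 3 4 a4 a5] a by simp
  ultimately show "distinct [c a1, c a2, c a3, c a4, c a5]" by simp
qed

context
  fixes n :: nat and c :: "nat set \<Rightarrow> nat"
  assumes norb: "\<not> has_rainbow_B2 n c" and ab: "c {} \<noteq> c {1..n}"
begin

lemma rb:
  assumes "W4 \<subseteq> {1..n}" "W1 \<subset> W2" "W2 \<subset> W4" "W1 \<subset> W3" "W3 \<subset> W4"
    "\<not> W2 \<subseteq> W3" "\<not> W3 \<subseteq> W2" "distinct [c W1, c W2, c W3, c W4]"
  shows False
proof -
  have "W1 \<subseteq> {1..n}" "W2 \<subseteq> {1..n}" "W3 \<subseteq> {1..n}" using assms(1-5) by blast+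
  then have "rainbow_B2 n c W1 W2 W3 W4" using assms unfolding rainbow_B2_def Bn_def by simp
  thus False using norb unfolding has_rainbow_B2_def by blast
qed

lemma fact1:
  assumes "S \<subseteq> {1..n}" "T \<subseteq> {1..n}" "c S \<noteq> c {}" "c S \<noteq> c {1..n}"
    "c T \<noteq> c {}" "c T \<noteq> c {1..n}" "c S \<noteq> c T"
  shows "S \<subseteq> T \<or> T \<subseteq> S"
proof (rule ccontr)
  assume h: "\<not> (S \<subseteq> T \<or> T \<subseteq> S)"
  have ne: "S \<noteq> {}" "T \<noteq> {}" "S \<noteq> {1..n}" "T \<noteq> {1..n}" using assms(3-6) by auto
  have s: "{} \<subset> S" "S \<subset> {1..n}" "{} \<subset> T" "T \<subset> {1..n}" "\<not> S \<subseteq> T" "\<not> T \<subseteq> S"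
    using ne h assms(1,2) by blast+
  have d: "distinct [c {}, c S, c T, c {1..n}]"
    using assms(3-7) ab not_sym[OF assms(3)] not_sym[OF assms(5)] by simp
  show False by (rule rb[OF order_refl s d])
qed

lemma incomp:
  assumes t: "tri c n P Q R" and z: "P \<subset> Z" "Z \<subset> R" "\<not> Z \<subseteq> Q" "\<not> Q \<subseteq> Z"
  shows "c Z = c Q"
proof (rule ccontr)
  assume ne: "c Z \<noteq> c Q"
  note t1 = triD[OF t]
  note td = dist5D[OF t1(4)]
  have ZN: "Z \<subseteq> {1..n}" "Q \<subseteq> {1..n}" using z t1(2,3) by blast+
  have nP: "c Z \<noteq> c P"
  proof
    assume e: "c Z = c P"
    have "Z \<subseteq> Q \<or> Q \<subseteq> Z" using td e fact1[OF ZN] by simp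
    thus False using z by blast
  qed
  have nR: "c Z \<noteq> c R"
  proof
    assume e: "c Z = c R"
    have "Z \<subseteq> Q \<or> Q \<subseteq> Z" using td e fact1[OF ZN] by simp
    thus False using z by blast
  qed
  have d: "distinct [c P, c Q, c Z, c R]" using td ne nP nR not_sym[OF nP] not_sym[OF ne] by simp
  show False using rb[OF t1(3) _ t1(2) z(1,2) _ _ d] t1(1) z by blast
qed

lemma IL:
  assumes t: "tri c n P Q R" and z: "P \<subset> Z" "Z \<subset> R"
  shows "c Z = c Q"
proof -
  note t1 = triD[OF t]
  note td = dist5D[OF t1(4)]
  have single_out: "c (insert i P) = c Q" if "i \<in> R" "i \<notin> Q" for i
  proof -
    obtain e where e: "e \<in> Q" "e \<notin> P" using t1 by blast
    show ?thesis
      by (rule incomp[OF t]) (use that e t1(1-3) in blast)+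
  qed
  obtain j where j: "j \<in> R" "j \<notin> Q" using t1 by blast
  have single: "c (insert i P) = c Q" if "i \<in> R" "i \<notin> P" for i
  proof (cases "i \<in> Q")
    case False then show ?thesis using single_out that by blast
  next
    case True
    have cj: "c (insert j P) = c Q" using single_out j by blast
    have t2: "tri c n P (insert j P) R"
      by (rule triI) (use t1(1-3) j that True in blast, use t1(1-3) j that True in blast,
          use t1(3) in blast, use t1(4) cj in simp)
    have "c (insert i P) = c (insert j P)"
      by (rule incomp[OF t2]) (use t1(1-3) j that True in blast)+
    with cj show ?thesis by simp
  qed
  obtain i where i: "i \<in> R" "i \<notin> Z" using z by blast
  obtain e where e: "e \<in> Z" "e \<notin> P" using z by blast
  have ci: "c (insert i P) = c Q" using single i z by blast
  have t3: "tri c n P (insert i P) R"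
    by (rule triI) (use t1(1-3) i e z in blast, use t1(1-3) i e z in blast,
          use t1(3) in blast, use t1(4) ci in simp)
  have "c Z = c (insert i P)"
    by (rule incomp[OF t3]) (use t1(1-3) i e z in blast)+
  with ci show ?thesis by simp
qed

lemma L1:
  assumes t: "tri c n P Q R" and zN: "Z \<subseteq> {1..n}" and za: "c Z \<noteq> c {}" and zb: "c Z \<noteq> c {1..n}"
  shows "Z = P \<or> Z = R \<or> (P \<subset> Z \<and> Z \<subset> R)"
proof -
  note t1 = triD[OF t]
  note td = dist5D[OF t1(4)]
  note zas = not_sym[OF za] and zbs = not_sym[OF zb]
  have PN: "P \<subseteq> {1..n}" and QN: "Q \<subseteq> {1..n}" using t1(1-3) by blast+
  have cmpP: "Z \<subseteq> P \<or> P \<subseteq> Z" if "c Z \<noteq> c P"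
    using td za zb that fact1[OF zN PN] by simp
  have cmpQ: "Z \<subseteq> Q \<or> Q \<subseteq> Z" if "c Z \<noteq> c Q"
    using td za zb that fact1[OF zN QN] by simp
  have cmpR: "Z \<subseteq> R \<or> R \<subseteq> Z" if "c Z \<noteq> c R"
    using td za zb that fact1[OF zN t1(3)] by simp
  consider "c Z = c P" | "c Z = c Q" | "c Z = c R" | "c Z \<noteq> c P" "c Z \<noteq> c Q" "c Z \<noteq> c R"
    by blast
  then show ?thesis
  proof cases
    case 4
    note f4 = not_sym[OF 4(1)] not_sym[OF 4(2)] not_sym[OF 4(3)]
    show ?thesis
    proof (cases "Z \<subseteq> P")
      case True
      then have ZP: "Z \<subset> P" using 4 by auto
      have "tri c n Z P R"
        by (rule triI) (use ZP t1(1-3) in blast, use ZP t1(1-3) in blast, use t1(3) in blast,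
            use td za zb zas zbs 4 f4 in simp)
      then have "c Q = c P" by (rule IL) (use ZP t1(1-3) in blast)+
      then show ?thesis using td by simp
    next
      case False
      then have PZ: "P \<subset> Z" using cmpP 4 by auto
      show ?thesis
      proof (cases "Z \<subseteq> R")
        case True
        then have "Z \<subset> R" using 4 by auto
        then have "c Z = c Q" using IL[OF t PZ] by blast
        then show ?thesis using 4 by simp
      next
        case False
        then have RZ: "R \<subset> Z" using cmpR 4 by auto
        have "tri c n P R Z"
          by (rule triI) (use RZ t1(1-3) in blast, use RZ in blast, use zN in blast,
              use td za zb zas zbs 4 f4 in simp)
        then have "c Q = c R" by (rule IL) (use RZ t1(1-3) in blast)+
        then show ?thesis using td by simp
      qed
    qed
  next
    case 2
    show ?thesis
    proof (cases "Z \<subseteq> P")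
      case True
      then have ZP: "Z \<subset> P" using 2 td by auto
      have "tri c n Z P R"
        by (rule triI) (use ZP t1(1-3) in blast, use ZP t1(1-3) in blast, use t1(3) in blast,
            use td 2 in simp)
      then have "c Q = c P" by (rule IL) (use ZP t1(1-3) in blast)+
      then show ?thesis using td by simp
    next
      case False
      then have PZ: "P \<subset> Z" using cmpP 2 td by auto
      show ?thesis
      proof (cases "Z \<subseteq> R")
        case True
        then have "Z \<subset> R" using 2 td by auto
        then show ?thesis using PZ by blast
      next
        case False
        then have RZ: "R \<subset> Z" using cmpR 2 td by auto
        have "tri c n P R Z"
          by (rule triI) (use RZ t1(1-3) in blast, use RZ in blast, use zN in blast,
              use td 2 in simp)
        then have "c Q = c R" by (rule IL) (use RZ t1(1-3) in blast)+
        then show ?thesis using td by simp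
      qed
    qed
  next
    case 1
    show ?thesis
    proof (cases "Z \<subseteq> R")
      case True
      then have ZR: "Z \<subset> R" using 1 td by auto
      show ?thesis
      proof (cases "Q \<subseteq> Z")
        case True
        then have "P \<subset> Z" using t1(1) by blast
        then have "c Z = c Q" using IL[OF t _ ZR] by blast
        then show ?thesis using 1 td by simp
      next
        case False
        then have ZQ: "Z \<subseteq> Q" using cmpQ 1 td by auto
        show ?thesis
        proof (cases "Z = P")
          case True then show ?thesis by simp
        next
          case ZP: False
          show ?thesis
          proof (cases "P \<subseteq> Z")
            case True
            then have "P \<subset> Z" using ZP by blast
            then have "c Z = c Q" using IL[OF t _ ZR] by blast
            then show ?thesis using 1 td by simp
          next
            case nPZ: False
            show ?thesis
            proof (cases "Z \<subseteq> P")
              case True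
              then have ZP': "Z \<subset> P" using ZP by blast
              have "tri c n Z Q R"
                by (rule triI) (use ZP' t1(1-3) in blast, use t1(1-3) in blast, use t1(3) in blast,
                    use td 1 in simp)
              then have "c P = c Q" by (rule IL) (use ZP' t1(1-3) in blast)+
              then show ?thesis using td by simp
            next
              case nZP: False
              obtain i where i: "i \<in> Q" "i \<notin> P" using t1 by blast
              obtain j where j: "j \<in> R" "j \<notin> Q" using t1 by blast
              have ci: "c (insert i P) = c Q" by (rule IL[OF t]) (use i j t1(1-3) in blast)+
              have cj: "c (insert j P) = c Q" by (rule IL[OF t]) (use i j t1(1-3) in blast)+
              have iN: "insert i P \<subseteq> {1..n}" "insert j P \<subseteq> {1..n}" using i j t1(1-3) by blast+
              have "Z \<subseteq> insert i P \<or> insert i P \<subseteq> Z"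
                using td 1 ci za zb fact1[OF zN iN(1)] by simp
              then have Zi: "Z \<subseteq> insert i P" using nPZ by blast
              have "Z \<subseteq> insert j P \<or> insert j P \<subseteq> Z"
                using td 1 cj za zb fact1[OF zN iN(2)] by simp
              then have Zj: "Z \<subseteq> insert j P" using nPZ by blast
              have "i \<noteq> j" using i j by blast
              then have "Z \<subseteq> P" using Zi Zj by blast
              then show ?thesis using nZP by blast
            qed
          qed
        qed
      qed
    next
      case False
      then have RZ: "R \<subset> Z" using cmpR 1 td by auto
      obtain j where j: "j \<in> R" "j \<notin> Q" using t1 by blast
      obtain i where i: "i \<in> Z" "i \<notin> R" using RZ by blast
      obtain e where e: "e \<in> Q" "e \<notin> P" using t1 by blast
      have cj: "c (insert j P) = c Q" by (rule IL[OF t]) (use e j t1(1-3) in blast)+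
      have t2: "tri c n Q R Z"
        by (rule triI) (use t1(1-3) in blast, use RZ in blast, use zN in blast, use td 1 in simp)
      have ci: "c (insert i Q) = c R" by (rule IL[OF t2]) (use i j t1(1-3) RZ in blast)+
      have r1: "{} \<subset> insert j P" "insert j P \<subset> Z" "{} \<subset> insert i Q" "insert i Q \<subset> Z"
        "\<not> insert j P \<subseteq> insert i Q" "\<not> insert i Q \<subseteq> insert j P"
        using i j e t1(1-3) RZ by blast+
      have r2: "distinct [c {}, c (insert j P), c (insert i Q), c Z]"
        using td ci cj 1 by simp
      show ?thesis using rb[OF zN r1(1,2,3,4,5,6) r2] by blast
    qed
  next
    case 3
    show ?thesis
    proof (cases "Z \<subseteq> P")
      case True
      then have ZP: "Z \<subset> P" using 3 td by auto
      obtain i where i: "i \<in> P" "i \<notin> Z" using ZP by blast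
      obtain j where j: "j \<in> Q" "j \<notin> P" using t1 by blast
      obtain e where e: "e \<in> R" "e \<notin> Q" using t1 by blast
      have t2: "tri c n Z P Q"
        by (rule triI) (use ZP in blast, use t1(1-3) in blast, use QN in blast, use td 3 in simp)
      have ci: "c (Q - {i}) = c P" by (rule IL[OF t2]) (use i j ZP t1(1-3) in blast)+
      have cj: "c (R - {j}) = c Q" by (rule IL[OF t]) (use e j t1(1-3) in blast)+
      have r1: "Z \<subset> Q - {i}" "Q - {i} \<subset> {1..n}" "Z \<subset> R - {j}" "R - {j} \<subset> {1..n}"
        "\<not> Q - {i} \<subseteq> R - {j}" "\<not> R - {j} \<subseteq> Q - {i}"
        using i j e t1(1-3) ZP by blast+
      have r2: "distinct [c Z, c (Q - {i}), c (R - {j}), c {1..n}]"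
        using td ci cj 3 by simp
      show ?thesis using rb[OF order_refl r1(1,2,3,4,5,6) r2] by blast
    next
      case False
      then have PZ: "P \<subset> Z" using cmpP 3 td by auto
      show ?thesis
      proof (cases "Z \<subseteq> Q")
        case True
        then have "Z \<subset> R" using t1(2) by blast
        then have "c Z = c Q" using IL[OF t PZ] by blast
        then show ?thesis using 3 td by simp
      next
        case False
        then have QZ: "Q \<subseteq> Z" using cmpQ 3 td by auto
        show ?thesis
        proof (cases "Z = R")
          case True then show ?thesis by simp
        next
          case ZR: False
          show ?thesis
          proof (cases "Z \<subseteq> R")
            case True
            then have "Z \<subset> R" using ZR by blast
            then have "c Z = c Q" using IL[OF t PZ] by blast
            then show ?thesis using 3 td by simp
          next
            case nZR: False
            show ?thesis
            proof (cases "R \<subseteq> Z")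
              case True
              then have RZ: "R \<subset> Z" using ZR by blast
              have "tri c n P Q Z"
                by (rule triI) (use t1(1-3) in blast, use QZ RZ t1(1-3) in blast, use zN in blast,
                    use td 3 in simp)
              then have "c R = c Q" by (rule IL) (use RZ t1(1-3) in blast)+
              then show ?thesis using td by simp
            next
              case nRZ: False
              obtain i where i: "i \<in> Q" "i \<notin> P" using t1 by blast
              obtain j where j: "j \<in> R" "j \<notin> Q" using t1 by blast
              have ci: "c (R - {i}) = c Q" by (rule IL[OF t]) (use i j t1(1-3) in blast)+
              have cj: "c (R - {j}) = c Q" by (rule IL[OF t]) (use i j t1(1-3) in blast)+
              have iN: "R - {i} \<subseteq> {1..n}" "R - {j} \<subseteq> {1..n}" using t1(3) by blast+
              have "Z \<subseteq> R - {i} \<or> R - {i} \<subseteq> Z"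
                using td 3 ci za zb fact1[OF zN iN(1)] by simp
              then have Zi: "R - {i} \<subseteq> Z" using nZR by blast
              have "Z \<subseteq> R - {j} \<or> R - {j} \<subseteq> Z"
                using td 3 cj za zb fact1[OF zN iN(2)] by simp
              then have Zj: "R - {j} \<subseteq> Z" using nZR by blast
              have "i \<noteq> j" using i j by blast
              then have "R \<subseteq> Z" using Zi Zj by blast
              then show ?thesis using nRZ by blast
            qed
          qed
        qed
      qed
    qed
  qed
qed

lemma colAB:
  assumes t: "tri c n P Q R" and zN: "Z \<subseteq> {1..n}" and nz: "\<not> (P \<subseteq> Z \<and> Z \<subseteq> R)"
  shows "c Z = c {} \<or> c Z = c {1..n}"
proof (rule ccontr)
  assume "\<not> (c Z = c {} \<or> c Z = c {1..n})"
  then have za: "c Z \<noteq> c {}" and zb: "c Z \<noteq> c {1..n}" by blast+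
  have "Z = P \<or> Z = R \<or> (P \<subset> Z \<and> Z \<subset> R)" by (rule L1[OF t zN za zb])
  moreover note t1 = triD[OF t]
  ultimately show False using nz by blast
qed

lemma colA:
  assumes t: "tri c n P Q R" and zR: "Z \<subseteq> R" and nPZ: "\<not> P \<subseteq> Z"
  shows "c Z = c {}"
proof (rule ccontr)
  assume nA: "c Z \<noteq> c {}"
  note t1 = triD[OF t]
  note td = dist5D[OF t1(4)]
  have ZN: "Z \<subseteq> {1..n}" using zR t1(3) by blast
  have cb: "c Z = c {1..n}" using colAB[OF t ZN] nPZ nA by blast
  have G: False if W: "W \<subseteq> R" "\<not> P \<subseteq> W" "c W = c {1..n}" and jj: "j' \<in> R" "j' \<notin> P"
    "insert j' P \<noteq> R" "\<not> W \<subseteq> insert j' P" for W j'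
  proof -
    have cq: "c (insert j' P) = c Q" by (rule IL[OF t]) (use jj t1(1-3) in blast)+
    have Wne: "W \<noteq> {}" using W(3) ab by auto
    have r1: "{} \<subset> W" "W \<subset> R" "{} \<subset> insert j' P" "insert j' P \<subset> R" "\<not> W \<subseteq> insert j' P"
      "\<not> insert j' P \<subseteq> W"
      using W jj Wne t1(1-3) by blast+
    have r2: "distinct [c {}, c W, c (insert j' P), c R]" using td W(3) cq by simp
    show False using rb[OF t1(3) r1 r2] by blast
  qed
  obtain i where i: "i \<in> Q" "i \<notin> P" using t1 by blast
  obtain j where j: "j \<in> R" "j \<notin> Q" using t1 by blast
  have ne: "insert i P \<noteq> R" "insert j P \<noteq> R" using i j t1(1-3) by blast+
  have iR: "i \<in> R" "j \<notin> P" using i j t1(1-3) by blast+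
  have Zi: "Z \<subseteq> insert i P"
  proof (rule ccontr)
    assume "\<not> Z \<subseteq> insert i P"
    then show False using G[OF zR nPZ cb iR(1) i(2) ne(1)] by blast
  qed
  have Zj: "Z \<subseteq> insert j P"
  proof (rule ccontr)
    assume "\<not> Z \<subseteq> insert j P"
    then show False using G[OF zR nPZ cb j(1) iR(2) ne(2)] by blast
  qed
  have ZP: "Z \<subseteq> P" using Zi Zj i j by blast
  have Z'1: "insert j Z \<subseteq> R" "\<not> P \<subseteq> insert j Z" "insert j Z \<subseteq> {1..n}"
    using zR j nPZ iR(2) t1(3) by blast+
  have "c (insert j Z) = c {} \<or> c (insert j Z) = c {1..n}" using colAB[OF t Z'1(3)] Z'1(2) by blast
  then show False
  proof
    assume cz: "c (insert j Z) = c {1..n}"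
    have "\<not> insert j Z \<subseteq> insert i P" using i j iR(2) by blast
    then show False using G[OF Z'1(1,2) cz iR(1) i(2) ne(1)] by blast
  next
    assume ca: "c (insert j Z) = c {}"
    have cq: "c (insert j P) = c Q" by (rule IL[OF t]) (use i j t1(1-3) in blast)+
    have r1: "Z \<subset> P" "P \<subset> insert j P" "Z \<subset> insert j Z" "insert j Z \<subset> insert j P"
      "\<not> P \<subseteq> insert j Z" "\<not> insert j Z \<subseteq> P"
      using ZP nPZ j iR(2) Z'1(2) by blast+
    have jN: "insert j P \<subseteq> {1..n}" using j t1(1-3) by blast
    have r2: "distinct [c Z, c P, c (insert j Z), c (insert j P)]" using td cb ca cq by simp
    show False using rb[OF jN r1 r2] by blast
  qed
qed

lemma colB:
  assumes t: "tri c n P Q R" and pZ: "P \<subseteq> Z" and zN: "Z \<subseteq> {1..n}" and nZR: "\<not> Z \<subseteq> R"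
  shows "c Z = c {1..n}"
proof (rule ccontr)
  assume nB: "c Z \<noteq> c {1..n}"
  note t1 = triD[OF t]
  note td = dist5D[OF t1(4)]
  have ca: "c Z = c {}" using colAB[OF t zN] nZR nB by blast
  have H: False if W: "P \<subseteq> W" "W \<subseteq> {1..n}" "\<not> W \<subseteq> R" "c W = c {}" and jj: "j' \<in> R" "j' \<notin> P"
    "R - {j'} \<noteq> P" "\<not> R - {j'} \<subseteq> W" for W j'
  proof -
    have cq: "c (R - {j'}) = c Q" by (rule IL[OF t]) (use jj t1(1-3) in blast)+
    have Wn: "W \<noteq> {1..n}" using W(4) ab by auto
    have PW: "P \<noteq> W" using W(4) td by auto
    have r1: "P \<subset> W" "W \<subset> {1..n}" "P \<subset> R - {j'}" "R - {j'} \<subset> {1..n}" "\<not> W \<subseteq> R - {j'}"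
      "\<not> R - {j'} \<subseteq> W"
      using W jj Wn PW t1(1-3) by blast+
    have r2: "distinct [c P, c W, c (R - {j'}), c {1..n}]" using td W(4) cq by simp
    show False using rb[OF order_refl r1 r2] by blast
  qed
  obtain i where i: "i \<in> Q" "i \<notin> P" using t1 by blast
  obtain j where j: "j \<in> R" "j \<notin> Q" using t1 by blast
  have ne: "R - {i} \<noteq> P" "R - {j} \<noteq> P" using i j t1(1-3) by blast+
  have iR: "i \<in> R" "j \<notin> P" using i j t1(1-3) by blast+
  have Ri: "R - {i} \<subseteq> Z"
  proof (rule ccontr)
    assume "\<not> R - {i} \<subseteq> Z"
    then show False using H[OF pZ zN nZR ca iR(1) i(2) ne(1)] by blast
  qed
  have Rj: "R - {j} \<subseteq> Z"
  proof (rule ccontr)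
    assume "\<not> R - {j} \<subseteq> Z"
    then show False using H[OF pZ zN nZR ca j(1) iR(2) ne(2)] by blast
  qed
  have RZ: "R \<subseteq> Z" using Ri Rj i j by blast
  obtain e where e: "e \<in> Z" "e \<notin> R" using nZR by blast
  have Z'1: "P \<subseteq> Z - {j}" "Z - {j} \<subseteq> {1..n}" "\<not> Z - {j} \<subseteq> R"
    using pZ iR(2) zN e j by blast+
  have "c (Z - {j}) = c {} \<or> c (Z - {j}) = c {1..n}" using colAB[OF t Z'1(2)] Z'1(3) by blast
  then show False
  proof
    assume cz: "c (Z - {j}) = c {}"
    have "\<not> R - {i} \<subseteq> Z - {j}" using i j by blast
    then show False using H[OF Z'1 cz iR(1) i(2) ne(1)] by blast
  next
    assume cb: "c (Z - {j}) = c {1..n}"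
    have cq: "c (R - {j}) = c Q" by (rule IL[OF t]) (use i j t1(1-3) in blast)+
    have r1: "R - {j} \<subset> R" "R \<subset> Z" "R - {j} \<subset> Z - {j}" "Z - {j} \<subset> Z"
      "\<not> R \<subseteq> Z - {j}" "\<not> Z - {j} \<subseteq> R"
      using RZ e j Z'1(3) by blast+
    have r2: "distinct [c (R - {j}), c R, c (Z - {j}), c Z]" using td cb ca cq by simp
    show False using rb[OF zN r1 r2] by blast
  qed
qed

lemma type1_fwd:
  assumes t: "tri c n P Q R"
  shows "type1 n c"
proof -
  note t1 = triD[OF t]
  note td = dist5D[OF t1(4)]
  have h1: "{} \<subset> P" using td by auto
  have h2: "P \<subset> R" using t1(1,2) by blast
  have h3: "R \<subset> {1..n}" using td t1(3) by auto
  have fR: "finite R" using t1(3) finite_subset by blast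
  have fQ: "finite Q" using t1(2) fR finite_subset by blast
  have "card P < card Q" using psubset_card_mono[OF fQ t1(1)] .
  moreover have "card Q < card R" using psubset_card_mono[OF fR t1(2)] .
  ultimately have h4: "card R \<ge> card P + 2" by arith
  define F1 where "F1 = intv_cc {} R - intv_cc P R"
  define F5 where "F5 = intv_cc P {1..n} - intv_cc P R"
  have F1e: "A \<in> F1 \<longleftrightarrow> A \<subseteq> R \<and> \<not> P \<subseteq> A" for A unfolding F1_def intv_cc_def by blast
  have F5e: "A \<in> F5 \<longleftrightarrow> P \<subseteq> A \<and> A \<subseteq> {1..n} \<and> \<not> A \<subseteq> R" for A unfolding F5_def intv_cc_def by blast
  have md: "mono_distinct c [F1, {P}, intv_oo P R, {R}, F5]"
  proof (rule mono5I)
    show "distinct [c {}, c P, c Q, c R, c {1..n}]" using td by simp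
    show "\<forall>A\<in>F1. c A = c {}"
    proof
      fix A assume "A \<in> F1"
      then have "A \<subseteq> R" "\<not> P \<subseteq> A" using F1e by blast+
      then show "c A = c {}" by (rule colA[OF t])
    qed
    show "\<forall>A\<in>{P}. c A = c P" by simp
    show "\<forall>A\<in>intv_oo P R. c A = c Q" using IL[OF t] unfolding intv_oo_def by blast
    show "\<forall>A\<in>{R}. c A = c R" by simp
    show "\<forall>A\<in>F5. c A = c {1..n}"
    proof
      fix A assume "A \<in> F5"
      then have "P \<subseteq> A" "A \<subseteq> {1..n}" "\<not> A \<subseteq> R" using F5e by blast+
      then show "c A = c {1..n}" by (rule colB[OF t])
    qed
  qed
  have e1: "{} \<in> F1" unfolding F1e using h1 by blast
  have e5: "{1..n} \<in> F5" unfolding F5e using h2 h3 by blast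
  have last: "\<forall>Z \<in> Bn n - (intv_cc {} R \<union> intv_cc P {1..n}).
      (\<exists>A \<in> F1. c Z = c A) \<or> (\<exists>A \<in> F5. c Z = c A)"
  proof
    fix Z assume "Z \<in> Bn n - (intv_cc {} R \<union> intv_cc P {1..n})"
    then have zN: "Z \<subseteq> {1..n}" and nz: "\<not> (P \<subseteq> Z \<and> Z \<subseteq> R)"
      unfolding Bn_def intv_cc_def by blast+
    show "(\<exists>A \<in> F1. c Z = c A) \<or> (\<exists>A \<in> F5. c Z = c A)"
      using colAB[OF t zN nz] e1 e5 by blast
  qed
  show ?thesis unfolding type1_def Let_def
    apply (rule exI[of _ P], rule exI[of _ R])
    using h1 h2 h3 h4 md last unfolding F1_def F5_def by blast
qed

lemma img_sub:
  assumes t: "tri c n P Q R"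
  shows "c ` Bn n \<subseteq> {c {}, c {1..n}, c P, c Q, c R}"
proof
  fix w assume "w \<in> c ` Bn n"
  then obtain Z where Z: "Z \<subseteq> {1..n}" "w = c Z" unfolding Bn_def by blast
  show "w \<in> {c {}, c {1..n}, c P, c Q, c R}"
  proof (cases "c Z = c {} \<or> c Z = c {1..n}")
    case True then show ?thesis using Z by blast
  next
    case False
    then have "Z = P \<or> Z = R \<or> (P \<subset> Z \<and> Z \<subset> R)" using L1[OF t Z(1)] by blast
    then show ?thesis using IL[OF t] Z by blast
  qed
qed

lemma fwd:
  assumes t: "tri c n P Q R" and ex: "exact_coloring n k c" and k5: "k \<ge> 5"
  shows "k = 5 \<and> type1 n c"
proof -
  have "{1..k} \<subseteq> {c {}, c {1..n}, c P, c Q, c R}"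
    using img_sub[OF t] ex unfolding exact_coloring_def by blast
  then have "card {1..k} \<le> card {c {}, c {1..n}, c P, c Q, c R}" by (rule card_mono[rotated]) simp
  also have "\<dots> \<le> 5" using card_length[of "[c {}, c {1..n}, c P, c Q, c R]"] by simp
  finally have "k \<le> 5" by simp
  then show ?thesis using k5 type1_fwd[OF t] by simp
qed

end

lemma three_elems:
  assumes "3 \<le> card S"
  obtains u v w where "u \<in> S" "v \<in> S" "w \<in> S" "u \<noteq> v" "u \<noteq> w" "v \<noteq> w"
proof -
  have h3: "Suc (Suc (Suc 0)) \<le> card S" using assms by simp
  obtain u B where B: "S = insert u B" "u \<notin> B" "Suc (Suc 0) \<le> card B"
    using card_le_Suc_iff[of "Suc (Suc 0)" S] h3 by blast
  obtain v C where C: "B = insert v C" "v \<notin> C" "Suc 0 \<le> card C"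
    using card_le_Suc_iff[of "Suc 0" B] B(3) by blast
  obtain w D where D: "C = insert w D" "w \<notin> D"
    using card_le_Suc_iff[of 0 C] C(3) by blast
  show ?thesis by (rule that[of u v w]) (use B C D in blast)+
qed

lemma fwd_all:
  fixes n k :: nat and c :: "nat set \<Rightarrow> nat"
  assumes norb: "\<not> has_rainbow_B2 n c" and ab: "c {} \<noteq> c {1..n}"
    and ex: "exact_coloring n k c" and k5: "k \<ge> 5"
  shows "k = 5 \<and> type1 n c"
proof -
  let ?a = "c {}" and ?b = "c {1..n}"
  have img: "c ` Bn n = {1..k}" using ex unfolding exact_coloring_def .
  have "card {?a, ?b} \<le> 2" using card_length[of "[?a, ?b]"] by simp
  moreover have "card {1..k} - card {?a, ?b} \<le> card ({1..k} - {?a, ?b})"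
    by (rule diff_card_le_card_Diff) simp
  moreover have "card {1..k} = k" by simp
  ultimately have "3 \<le> card ({1..k} - {?a, ?b})" using k5 by linarith
  then obtain u v w where uvw: "u \<in> {1..k} - {?a, ?b}" "v \<in> {1..k} - {?a, ?b}" "w \<in> {1..k} - {?a, ?b}"
    "u \<noteq> v" "u \<noteq> w" "v \<noteq> w" by (rule three_elems)
  obtain U where U: "U \<subseteq> {1..n}" "c U = u" using uvw(1) img unfolding Bn_def by (metis DiffD1 imageE PowD)
  obtain V where V: "V \<subseteq> {1..n}" "c V = v" using uvw(2) img unfolding Bn_def by (metis DiffD1 imageE PowD)
  obtain W where W: "W \<subseteq> {1..n}" "c W = w" using uvw(3) img unfolding Bn_def by (metis DiffD1 imageE PowD)
  have cs: "c U \<noteq> ?a" "c U \<noteq> ?b" "c V \<noteq> ?a" "c V \<noteq> ?b" "c W \<noteq> ?a" "c W \<noteq> ?b"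
    "c U \<noteq> c V" "c U \<noteq> c W" "c V \<noteq> c W"
    using uvw U(2) V(2) W(2) by simp_all
  have dU: "distinct [?a, ?b, c U, c V, c W]" using cs ab by simp
  note dd = dist5D[OF dU]
  have cUV: "U \<subset> V \<or> V \<subset> U"
    using fact1[OF norb ab U(1) V(1) cs(1,2,3,4,7)] cs(7) by auto
  have cUW: "U \<subset> W \<or> W \<subset> U"
    using fact1[OF norb ab U(1) W(1) cs(1,2,5,6,8)] cs(8) by auto
  have cVW: "V \<subset> W \<or> W \<subset> V"
    using fact1[OF norb ab V(1) W(1) cs(3,4,5,6,9)] cs(9) by auto
  have key: "k = 5 \<and> type1 n c" if "X \<subset> Y" "Y \<subset> Z" "Z \<subseteq> {1..n}" "distinct [?a, ?b, c X, c Y, c Z]" for X Y Z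
    using fwd[OF norb ab triI[OF that] ex k5] .
  have "(U \<subset> V \<and> V \<subset> W) \<or> (U \<subset> W \<and> W \<subset> V) \<or> (V \<subset> U \<and> U \<subset> W) \<or> (V \<subset> W \<and> W \<subset> U)
     \<or> (W \<subset> U \<and> U \<subset> V) \<or> (W \<subset> V \<and> V \<subset> U)"
    using cUV cUW cVW by blast
  then show ?thesis
  proof (elim disjE conjE)
    assume "U \<subset> V" "V \<subset> W" then show ?thesis using key W(1) dd by simp
  next
    assume "U \<subset> W" "W \<subset> V" then show ?thesis using key V(1) dd by simp
  next
    assume "V \<subset> U" "U \<subset> W" then show ?thesis using key W(1) dd by simp
  next
    assume "V \<subset> W" "W \<subset> U" then show ?thesis using key U(1) dd by simp
  next
    assume "W \<subset> U" "U \<subset> V" then show ?thesis using key V(1) dd by simp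
  next
    assume "W \<subset> V" "V \<subset> U" then show ?thesis using key U(1) dd by simp
  qed
qed

lemma noRB:
  fixes c :: "nat set \<Rightarrow> nat"
  assumes dist: "distinct [a, x, m, y, b]"
    and hA: "\<And>Z. Z \<subseteq> Y0 \<Longrightarrow> \<not> X0 \<subseteq> Z \<Longrightarrow> c Z = a"
    and hX: "c X0 = x" and hM: "\<And>Z. X0 \<subset> Z \<Longrightarrow> Z \<subset> Y0 \<Longrightarrow> c Z = m" and hY: "c Y0 = y"
    and hB: "\<And>Z. X0 \<subseteq> Z \<Longrightarrow> Z \<subseteq> N \<Longrightarrow> \<not> Z \<subseteq> Y0 \<Longrightarrow> c Z = b"
    and hO: "\<And>Z. Z \<subseteq> N \<Longrightarrow> \<not> Z \<subseteq> Y0 \<Longrightarrow> \<not> X0 \<subseteq> Z \<Longrightarrow> c Z = a \<or> c Z = b"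
    and W: "W4 \<subseteq> N" "W1 \<subset> W2" "W2 \<subset> W4" "W1 \<subset> W3" "W3 \<subset> W4" "\<not> W2 \<subseteq> W3" "\<not> W3 \<subseteq> W2"
      "distinct [c W1, c W2, c W3, c W4]"
  shows False
proof -
  have ab: "a \<noteq> b" using dist by simp
  have dW: "c W1 \<noteq> c W2" "c W1 \<noteq> c W3" "c W1 \<noteq> c W4" "c W2 \<noteq> c W3" "c W2 \<noteq> c W4" "c W3 \<noteq> c W4"
    using W(8) by simp_all
  have out: "c Z = a \<or> c Z = b" if "Z \<subseteq> N" "\<not> (X0 \<subseteq> Z \<and> Z \<subseteq> Y0)" for Z
  proof (cases "Z \<subseteq> Y0")
    case True then show ?thesis using hA that by blast
  next
    case False
    show ?thesis
    proof (cases "X0 \<subseteq> Z")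
      case True then show ?thesis using hB that False by blast
    next
      case nX: False then show ?thesis using hO that False by blast
    qed
  qed
  have inner: "X0 \<subseteq> V \<and> V \<subseteq> Y0" if V: "W1 \<subset> V" "V \<subset> W4"
    "c W1 \<noteq> c V" "c V \<noteq> c W4" for V
  proof (rule ccontr)
    assume nV: "\<not> (X0 \<subseteq> V \<and> V \<subseteq> Y0)"
    have VN: "V \<subseteq> N" using V W(1) by blast
    show False
    proof (cases "X0 \<subseteq> V")
      case True
      then have nVY: "\<not> V \<subseteq> Y0" using nV by blast
      have "c V = b" using hB[OF True VN nVY] .
      moreover have "c W4 = b" using hB[of W4] True V nVY W(1) by blast
      ultimately show False using V(4) by simp
    next
      case False
      then have n1: "\<not> X0 \<subseteq> W1" using V(1) by blast
      show False
      proof (cases "V \<subseteq> Y0")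
        case True
        have "c V = a" using hA[OF True False] .
        moreover have "c W1 = a" using hA[OF _ n1] True V(1) by blast
        ultimately show False using V(3) by simp
      next
        case nVY: False
        have "c V = a \<or> c V = b" using out[OF VN] nV by blast
        moreover have "c W1 = a \<or> c W1 = b" using out[of W1] n1 V(1) VN by blast
        moreover have "c W4 = a \<or> c W4 = b" using out[of W4] nVY V(2) W(1) by blast
        ultimately show False using V(3,4) dW(3) by auto
      qed
    qed
  qed
  have i2: "X0 \<subseteq> W2 \<and> W2 \<subseteq> Y0" using inner[OF W(2,3) dW(1,5)] .
  have i3: "X0 \<subseteq> W3 \<and> W3 \<subseteq> Y0" using inner[OF W(4,5) dW(2,6)] .
  have "X0 \<subset> W2 \<and> W2 \<subset> Y0" using i2 i3 W(6,7) by blast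
  then have "c W2 = m" using hM by blast
  moreover have "X0 \<subset> W3 \<and> W3 \<subset> Y0" using i2 i3 W(6,7) by blast
  then have "c W3 = m" using hM by blast
  ultimately show False using dW(4) by simp
qed

lemma bwd:
  fixes n :: nat and c :: "nat set \<Rightarrow> nat"
  assumes "type1 n c"
  shows "\<not> has_rainbow_B2 n c"
proof -
  obtain X0 Y0 where h: "{} \<subset> X0" "X0 \<subset> Y0" "Y0 \<subset> {1..n}" "card Y0 \<ge> card X0 + 2"
    and md: "mono_distinct c [intv_cc {} Y0 - intv_cc X0 Y0, {X0}, intv_oo X0 Y0, {Y0},
                intv_cc X0 {1..n} - intv_cc X0 Y0]"
    and last: "\<forall>Z \<in> Bn n - (intv_cc {} Y0 \<union> intv_cc X0 {1..n}).
            (\<exists>A \<in> intv_cc {} Y0 - intv_cc X0 Y0. c Z = c A) \<or> (\<exists>A \<in> intv_cc X0 {1..n} - intv_cc X0 Y0. c Z = c A)"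
    using assms unfolding type1_def Let_def by blast
  have fY: "finite Y0" using h(3) finite_subset by blast
  have fX: "finite X0" using h(2) fY finite_subset by blast
  obtain i where i: "i \<in> Y0" "i \<notin> X0" using h(2) by blast
  have "card (insert i X0) = card X0 + 1" using fX i by simp
  then have "insert i X0 \<noteq> Y0" using h(4) by auto
  then have Q0: "insert i X0 \<in> intv_oo X0 Y0" unfolding intv_oo_def using i h(2) by blast
  have e1: "{} \<in> intv_cc {} Y0 - intv_cc X0 Y0" unfolding intv_cc_def using h(1) by blast
  have e5: "{1..n} \<in> intv_cc X0 {1..n} - intv_cc X0 Y0" unfolding intv_cc_def using h(2,3) by blast
  note M = mono5D[OF md e1 singletonI Q0 singletonI e5]
  have dist: "distinct [c {}, c X0, c (insert i X0), c Y0, c {1..n}]" using M(1) by simp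
  have hA: "c Z = c {}" if "Z \<subseteq> Y0" "\<not> X0 \<subseteq> Z" for Z
    using M(2) that unfolding intv_cc_def by blast
  have hM: "c Z = c (insert i X0)" if "X0 \<subset> Z" "Z \<subset> Y0" for Z
    using M(3) that unfolding intv_oo_def by blast
  have hB: "c Z = c {1..n}" if "X0 \<subseteq> Z" "Z \<subseteq> {1..n}" "\<not> Z \<subseteq> Y0" for Z
    using M(4) that unfolding intv_cc_def by blast
  have hO: "c Z = c {} \<or> c Z = c {1..n}" if "Z \<subseteq> {1..n}" "\<not> Z \<subseteq> Y0" "\<not> X0 \<subseteq> Z" for Z
  proof -
    have "Z \<in> Bn n - (intv_cc {} Y0 \<union> intv_cc X0 {1..n})"
      using that unfolding Bn_def intv_cc_def by blast
    then have "(\<exists>A \<in> intv_cc {} Y0 - intv_cc X0 Y0. c Z = c A) \<or> (\<exists>A \<in> intv_cc X0 {1..n} - intv_cc X0 Y0. c Z = c A)"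
      using last by blast
    then show ?thesis using M(2,4) by metis
  qed
  show ?thesis
  proof
    assume "has_rainbow_B2 n c"
    then obtain W1 W2 W3 W4 where r: "rainbow_B2 n c W1 W2 W3 W4" unfolding has_rainbow_B2_def by blast
    then have W: "W4 \<subseteq> {1..n}" "W1 \<subset> W2" "W2 \<subset> W4" "W1 \<subset> W3" "W3 \<subset> W4" "\<not> W2 \<subseteq> W3" "\<not> W3 \<subseteq> W2"
      "distinct [c W1, c W2, c W3, c W4]"
      unfolding rainbow_B2_def Bn_def by blast+
    show False by (rule noRB[OF dist hA refl hM refl hB hO W]) (assumption+)
  qed
qed

theorem lemma2p5:
  fixes k n :: nat and c :: "nat set \<Rightarrow> nat"
  assumes "k \<ge> 5" and "n \<ge> 4"
    and "exact_coloring n k c"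
    and "c {} \<noteq> c {1..n}"
  shows "\<not> has_rainbow_B2 n c \<longleftrightarrow> (k = 5 \<and> type1 n c)"
proof
  assume "\<not> has_rainbow_B2 n c"
  then show "k = 5 \<and> type1 n c" using fwd_all assms(1,3,4) by blast
next
  assume "k = 5 \<and> type1 n c"
  then show "\<not> has_rainbow_B2 n c" using bwd by blast
qed

end
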